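(* Let $R$ be a pmp equivalence relation and $F\subseteq\llbracket R\rrbracket$ finite. For every $\kappa>0$ there is $\varepsilon>0$ such that $s(F,n)\leq s_\varepsilon(F,n)+\kappa$ for all $n\in\mathbb N$. The same holds with $\underline s$ in place of $s$ (both sides), and with $s_\omega$ in place of $s$ for any nonprincipal ultrafilter $\omega$.
   Context: Let $(X,\mu)$ be a standard probability space and $R$ a pmp countable Borel equivalence relation. $\llbracket R\rrbracket$ denotes the set of partial measure-preserving Borel bijections between Borel subsets of $X$ with graph contained in $R$, modulo null sets, with composition, inverses and identity $1$. Pairwise orthogonal elements (pairwise disjoint domains and ranges) have a sum; $\mathbf\Sigma F$ is the set of finite sums of pairwise orthogonal elements of $F$; $F_\pm=F\cup\{s^{-1}:s\in F\}\cup\{1\}$; $F_\pm^n$ the products of $n$ elements of $F_\pm$. $|s-t|=\mu\{x\in\operatorname{dom}s\cup\operatorname{dom}t:s(x)\neq t(x)\}$ (with $s(x)\neq t(x)$ on $\operatorname{dom}s\triangle\operatorname{dom}t$), $\tau(s)=\mu\{x\in\operatorname{dom}s:s(x)=x\}$. $\llbracket d\rrbracket$: partial permutations of $\{1,\dots,d\}$ with uniform measure, same distance, trace $\operatorname{tr}$. ${\rm SA}(F,n,\delta,d)$ is the set of maps $\varphi:\llbracket R\rrbracket\to\llbracket d\rrbracket$ with $\varphi(1)=1$ such that $|\varphi(st)-\varphi(s)\varphi(t)|<\delta$ for all $s,t\in\mathbf\Sigma F_\pm^n$ with $st\in\mathbf\Sigma F_\pm^n$, and $|\operatorname{tr}(\varphi(s))-\tau(s)|<\delta$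 for all $s\in\mathbf\Sigma F_\pm^n$. For maps $\varphi,\psi$ put $|\varphi-\psi|_F=\max_{s\in F}|\varphi(s)-\psi(s)|$, and for $\varepsilon\ge0$ let $N_\varepsilon(S)$ be the minimal number of closed $|\cdot|_F$-balls of radius $\varepsilon$ covering a set $S$ of maps (so $N_0({\rm SA}(F,n,\delta,d))={\rm NSA}(F,n,\delta,d)$, the number of distinct restrictions to $F$). Define $s_\varepsilon(F,n,\delta)=\limsup_{d\to\infty}\frac{1}{d\log d}\log N_\varepsilon({\rm SA}(F,n,\delta,d))$ ($\log0=-\infty$), $s_\varepsilon(F,n)=\inf_{\delta>0}s_\varepsilon(F,n,\delta)$, $s_\varepsilon(F)=\inf_n s_\varepsilon(F,n)$; $s(F,n),s(F)$ are the case $\varepsilon=0$. The versions $\underline s$ use $\liminf_d$ and $s_\omega$ use $\lim_{d\to\omega}$. *)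

theory Defs
  imports "HOL-Probability.Probability"
begin

definition pmap_fun :: "('a \<rightharpoonup> 'a) \<Rightarrow> 'a \<Rightarrow> 'a" where
  "pmap_fun f = (\<lambda>x. the (f x))"

definition partial_borel_bij :: "'a measure \<Rightarrow> ('a \<times> 'a) set \<Rightarrow> ('a \<rightharpoonup> 'a) \<Rightarrow> bool" where
  "partial_borel_bij M R f \<longleftrightarrow>
     dom f \<in> sets M \<and> ran f \<in> sets M \<and> inj_on f (dom f) \<and>
     (\<forall>x\<in>dom f. (x, pmap_fun f x) \<in> R) \<and>
     (\<forall>C\<in>sets M. {x\<in>dom f. pmap_fun f x \<in> C} \<in> sets M) \<and>
     (\<forall>C\<in>sets M. C \<subseteq> dom f \<longrightarrow> pmap_fun f ` C \<in> sets M)"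

definition measure_pres :: "'a measure \<Rightarrow> ('a \<rightharpoonup> 'a) \<Rightarrow> bool" where
  "measure_pres M f \<longleftrightarrow>
     (\<forall>C\<in>sets M. C \<subseteq> dom f \<longrightarrow> emeasure M (pmap_fun f ` C) = emeasure M C)"

definition pbij :: "'a measure \<Rightarrow> ('a \<times> 'a) set \<Rightarrow> ('a \<rightharpoonup> 'a) \<Rightarrow> bool" where
  "pbij M R f \<longleftrightarrow> partial_borel_bij M R f \<and> measure_pres M f"

definition pmp_cber :: "'a::polish_space measure \<Rightarrow> ('a \<times> 'a) set \<Rightarrow> bool" where
  "pmp_cber M R \<longleftrightarrow>
     prob_space M \<and> sets M = sets borel \<and>
     equiv UNIV R \<and> (\<forall>x. countable (R `` {x})) \<and> R \<in> sets (M \<Otimes>\<^sub>M M) \<and>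
     (\<forall>f. partial_borel_bij M R f \<longrightarrow> measure_pres M f)"

section \<open>The full pseudogroup [[R]] (classes modulo null sets)\<close>

definition pg_class :: "'a measure \<Rightarrow> ('a \<times> 'a) set \<Rightarrow> ('a \<rightharpoonup> 'a) \<Rightarrow> ('a \<rightharpoonup> 'a) set" where
  "pg_class M R f = {g. pbij M R g \<and> {x. g x \<noteq> f x} \<in> null_sets M}"

definition fullpg :: "'a measure \<Rightarrow> ('a \<times> 'a) set \<Rightarrow> ('a \<rightharpoonup> 'a) set set" where
  "fullpg M R = {pg_class M R f | f. pbij M R f}"

definition pg_rep :: "('a \<rightharpoonup> 'a) set \<Rightarrow> ('a \<rightharpoonup> 'a)" where
  "pg_rep S = (SOME s. s \<in> S)"

definition pg_mult :: "'a measure \<Rightarrow> ('a \<times> 'a) set \<Rightarrow> ('a \<rightharpoonup> 'a) set \<Rightarrow> ('a \<rightharpoonup> 'a) set \<Rightarrow> ('a \<rightharpoonup> 'a) set" where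
  "pg_mult M R S T = pg_class M R (pg_rep S \<circ>\<^sub>m pg_rep T)"

definition pinv :: "('a \<rightharpoonup> 'a) \<Rightarrow> ('a \<rightharpoonup> 'a)" where
  "pinv f = (\<lambda>y. if y \<in> ran f then Some (THE x. f x = Some y) else None)"

definition pg_inv :: "'a measure \<Rightarrow> ('a \<times> 'a) set \<Rightarrow> ('a \<rightharpoonup> 'a) set \<Rightarrow> ('a \<rightharpoonup> 'a) set" where
  "pg_inv M R S = pg_class M R (pinv (pg_rep S))"

definition pg_one :: "'a measure \<Rightarrow> ('a \<times> 'a) set \<Rightarrow> ('a \<rightharpoonup> 'a) set" where
  "pg_one M R = pg_class M R (\<lambda>x. Some x)"

definition pg_trace :: "'a measure \<Rightarrow> ('a \<rightharpoonup> 'a) set \<Rightarrow> real" where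
  "pg_trace M S = measure M {x. pg_rep S x = Some x}"

text \<open>Sigma F: finite sums of pairwise orthogonal elements of F (representatives chosen with
  pairwise disjoint domains and ranges).\<close>
definition pg_Sigma :: "'a measure \<Rightarrow> ('a \<times> 'a) set \<Rightarrow> ('a \<rightharpoonup> 'a) set set \<Rightarrow> ('a \<rightharpoonup> 'a) set set" where
  "pg_Sigma M R F = {pg_class M R (foldr (++) ss Map.empty) | ss.
      (\<forall>s\<in>set ss. pbij M R s \<and> pg_class M R s \<in> F) \<and>
      (\<forall>i<length ss. \<forall>j<length ss. i \<noteq> j \<longrightarrow>
          dom (ss!i) \<inter> dom (ss!j) = {} \<and> ran (ss!i) \<inter> ran (ss!j) = {})}"

definition pg_pm :: "'a measure \<Rightarrow> ('a \<times> 'a) set \<Rightarrow> ('a \<rightharpoonup> 'a) set set \<Rightarrow> ('a \<rightharpoonup> 'a) set set" where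
  "pg_pm M R F = F \<union> pg_inv M R ` F \<union> {pg_one M R}"

fun pg_pow :: "'a measure \<Rightarrow> ('a \<times> 'a) set \<Rightarrow> ('a \<rightharpoonup> 'a) set set \<Rightarrow> nat \<Rightarrow> ('a \<rightharpoonup> 'a) set set" where
  "pg_pow M R F 0 = {pg_one M R}"
| "pg_pow M R F (Suc n) = {pg_mult M R S T | S T. S \<in> pg_pm M R F \<and> T \<in> pg_pow M R F n}"

definition SigmaFn :: "'a measure \<Rightarrow> ('a \<times> 'a) set \<Rightarrow> ('a \<rightharpoonup> 'a) set set \<Rightarrow> nat \<Rightarrow> ('a \<rightharpoonup> 'a) set set" where
  "SigmaFn M R F n = pg_Sigma M R (pg_pow M R F n)"

definition pperm :: "nat \<Rightarrow> (nat \<rightharpoonup> nat) set" where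
  "pperm d = {\<sigma>. dom \<sigma> \<subseteq> {1..d} \<and> ran \<sigma> \<subseteq> {1..d} \<and> inj_on \<sigma> (dom \<sigma>)}"

definition pid :: "nat \<Rightarrow> (nat \<rightharpoonup> nat)" where
  "pid d = (\<lambda>i. if i \<in> {1..d} then Some i else None)"

definition ddist :: "nat \<Rightarrow> (nat \<rightharpoonup> nat) \<Rightarrow> (nat \<rightharpoonup> nat) \<Rightarrow> real" where
  "ddist d \<sigma> \<tau> = real (card {i\<in>{1..d}. \<sigma> i \<noteq> \<tau> i}) / real d"

definition dtr :: "nat \<Rightarrow> (nat \<rightharpoonup> nat) \<Rightarrow> real" where
  "dtr d \<sigma> = real (card {i\<in>{1..d}. \<sigma> i = Some i}) / real d"

definition SA :: "'a measure \<Rightarrow> ('a \<times> 'a) set \<Rightarrow> ('a \<rightharpoonup> 'a) set set \<Rightarrow> nat \<Rightarrow> real \<Rightarrow> nat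
                  \<Rightarrow> (('a \<rightharpoonup> 'a) set \<Rightarrow> (nat \<rightharpoonup> nat)) set" where
  "SA M R F n \<delta> d = {\<phi>. (\<forall>S\<in>fullpg M R. \<phi> S \<in> pperm d) \<and> \<phi> (pg_one M R) = pid d \<and>
      (\<forall>S\<in>SigmaFn M R F n. \<forall>T\<in>SigmaFn M R F n. pg_mult M R S T \<in> SigmaFn M R F n \<longrightarrow>
          ddist d (\<phi> (pg_mult M R S T)) (\<phi> S \<circ>\<^sub>m \<phi> T) < \<delta>) \<and>
      (\<forall>S\<in>SigmaFn M R F n. \<bar>dtr d (\<phi> S) - pg_trace M S\<bar> < \<delta>)}"

definition distF :: "nat \<Rightarrow> ('b set) \<Rightarrow> ('b \<Rightarrow> (nat \<rightharpoonup> nat)) \<Rightarrow> ('b \<Rightarrow> (nat \<rightharpoonup> nat)) \<Rightarrow> real" where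
  "distF d F \<phi> \<psi> = Max (insert 0 ((\<lambda>S. ddist d (\<phi> S) (\<psi> S)) ` F))"

definition covnum :: "'a measure \<Rightarrow> ('a \<times> 'a) set \<Rightarrow> ('a \<rightharpoonup> 'a) set set \<Rightarrow> nat \<Rightarrow> real
                      \<Rightarrow> (('a \<rightharpoonup> 'a) set \<Rightarrow> (nat \<rightharpoonup> nat)) set \<Rightarrow> nat" where
  "covnum M R F d \<epsilon> A = Inf {card C | C. finite C \<and>
       C \<subseteq> {\<psi>. \<forall>S\<in>fullpg M R. \<psi> S \<in> pperm d} \<and>
       A \<subseteq> (\<Union>\<psi>\<in>C. {\<phi>. distF d F \<phi> \<psi> \<le> \<epsilon>})}"

definition lognorm :: "nat \<Rightarrow> nat \<Rightarrow> ereal" where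
  "lognorm d N = (if N = 0 then -\<infinity> else ereal (ln (real N) / (real d * ln (real d))))"

text \<open>s_eps(F,n) with the limit along d given by agg (limsup, liminf or lim along an ultrafilter)\<close>
definition sdim :: "((nat \<Rightarrow> ereal) \<Rightarrow> ereal) \<Rightarrow> 'a measure \<Rightarrow> ('a \<times> 'a) set \<Rightarrow> ('a \<rightharpoonup> 'a) set set
                    \<Rightarrow> nat \<Rightarrow> real \<Rightarrow> ereal" where
  "sdim agg M R F n \<epsilon> =
     (INF \<delta>\<in>{0<..}. agg (\<lambda>d. lognorm d (covnum M R F d \<epsilon> (SA M R F n \<delta> d))))"

definition nonprincipal_ultrafilter :: "nat filter \<Rightarrow> bool" where
  "nonprincipal_ultrafilter \<omega> \<longleftrightarrow> \<omega> \<noteq> bot \<and>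
     (\<forall>P. eventually P \<omega> \<or> eventually (\<lambda>x. \<not> P x) \<omega>) \<and>
     (\<forall>k. \<not> eventually (\<lambda>d. d = k) \<omega>)"

end

theory Submission
  imports Defs
begin

lemma pperm_val:
  assumes "\<sigma> \<in> pperm d" shows "\<sigma> i \<in> insert None (Some ` {1..d})"
proof (cases "\<sigma> i")
  case (Some y) then have "y \<in> ran \<sigma>" by (auto simp: ran_def)
  then show ?thesis using assms Some unfolding pperm_def by auto
qed simp

lemma pperm_out:
  assumes "\<sigma> \<in> pperm d" "i \<notin> {1..d}" shows "\<sigma> i = None"
proof -
  have "i \<notin> dom \<sigma>" using assms unfolding pperm_def by auto
  then show ?thesis by (simp add: domIff)
qed

lemma finite_pperm: "finite (pperm d)"
proof -
  let ?f = "\<lambda>g i. if i \<in> {1..d} then g i else None"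
  let ?P = "{1..d} \<rightarrow>\<^sub>E insert None (Some ` {1..d})"
  have "pperm d \<subseteq> ?f ` ?P"
  proof
    fix \<sigma> assume s: "\<sigma> \<in> pperm d"
    have "restrict \<sigma> {1..d} \<in> ?P" using pperm_val[OF s] by auto
    moreover have "\<sigma> = ?f (restrict \<sigma> {1..d})"
      using pperm_out[OF s] by (auto simp: fun_eq_iff)
    ultimately show "\<sigma> \<in> ?f ` ?P" by blast
  qed
  moreover have "finite (?f ` ?P)" by (intro finite_imageI finite_PiE) auto
  ultimately show ?thesis by (rule finite_subset)
qed

lemma card_ball_pperm:
  fixes k :: nat
  shows "card {\<sigma>\<in>pperm d. card {i\<in>{1..d}. \<sigma> i \<noteq> \<tau> i} \<le> k} \<le> 2^d * (d+1)^k"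
proof -
  let ?T = "{\<sigma>\<in>pperm d. card {i\<in>{1..d}. \<sigma> i \<noteq> \<tau> i} \<le> k}"
  let ?D = "\<lambda>\<sigma>. {i\<in>{1..d}. \<sigma> i \<noteq> \<tau> i}"
  let ?h = "\<lambda>\<sigma>. (?D \<sigma>, restrict \<sigma> (?D \<sigma>))"
  let ?B = "SIGMA D:{D. D \<subseteq> {1..d} \<and> card D \<le> k}. (D \<rightarrow>\<^sub>E insert None (Some ` {1..d}))"
  have inj: "inj_on ?h ?T"
  proof (rule inj_onI)
    fix a b assume a: "a \<in> ?T" and b: "b \<in> ?T" and e: "?h a = ?h b"
    have e1: "?D a = ?D b" using arg_cong[OF e, of fst] by (simp only: fst_conv)
    have e2: "restrict a (?D a) = restrict b (?D b)" using arg_cong[OF e, of snd] by (simp only: snd_conv)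
    show "a = b"
    proof
      fix i
      show "a i = b i"
      proof (cases "i \<in> {1..d}")
        case False
        then show ?thesis using a b pperm_out[of a d i] pperm_out[of b d i] by simp
      next
        case True
        show ?thesis
        proof (cases "i \<in> ?D a")
          case True
          have "restrict a (?D a) i = restrict b (?D b) i" using e2 by (rule arg_cong)
          then show ?thesis using True e1 by (simp only: restrict_apply' )
        next
          case False
          have F2: "i \<notin> ?D b" using e1 False by (rule subst)
          have "a i = \<tau> i" using False \<open>i \<in> {1..d}\<close> by blast
          moreover have "b i = \<tau> i" using F2 \<open>i \<in> {1..d}\<close> by blast
          ultimately show ?thesis by simp
        qed
      qed
    qed
  qed
  have sub: "?h ` ?T \<subseteq> ?B"
  proof
    fix x assume "x \<in> ?h ` ?T"
    then obtain \<sigma> where s: "\<sigma> \<in> ?T" and x: "x = ?h \<sigma>" by blast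
    have "restrict \<sigma> (?D \<sigma>) \<in> ?D \<sigma> \<rightarrow>\<^sub>E insert None (Some ` {1..d})"
      using pperm_val[of \<sigma> d] s by auto
    then show "x \<in> ?B" using s x by auto
  qed
  have finB: "finite ?B" by (intro finite_SigmaI finite_PiE) (auto intro: finite_subset)
  have "card ?T = card (?h ` ?T)" using inj by (simp add: card_image)
  also have "\<dots> \<le> card ?B" using sub finB by (rule card_mono[rotated])
  also have "\<dots> = (\<Sum>D\<in>{D. D \<subseteq> {1..d} \<and> card D \<le> k}. card (D \<rightarrow>\<^sub>E insert None (Some ` {1..d})))"
    by (rule card_SigmaI) (auto intro!: finite_PiE intro: finite_subset)
  also have "\<dots> \<le> (\<Sum>D\<in>{D. D \<subseteq> {1..d} \<and> card D \<le> k}. (d+1)^k)"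
  proof (rule sum_mono)
    fix D assume D: "D \<in> {D. D \<subseteq> {1..d} \<and> card D \<le> k}"
    have "card (D \<rightarrow>\<^sub>E insert None (Some ` {1..d})) = (d+1) ^ card D"
      using D by (subst card_PiE) (auto simp: finite_subset card_image card_insert_if prod_constant)
    also have "\<dots> \<le> (d+1)^k" using D by (intro power_increasing) auto
    finally show "card (D \<rightarrow>\<^sub>E insert None (Some ` {1..d})) \<le> (d+1)^k" .
  qed
  also have "\<dots> = card {D. D \<subseteq> {1..d} \<and> card D \<le> k} * (d+1)^k" by simp
  also have "\<dots> \<le> 2^d * (d+1)^k"
  proof -
    have "card {D. D \<subseteq> {1..d} \<and> card D \<le> k} \<le> card (Pow {1..d})"
      by (intro card_mono) auto
    also have "\<dots> = 2^d" by (simp add: card_Pow)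
    finally show ?thesis by simp
  qed
  finally show ?thesis .
qed

definition VV :: "'b set \<Rightarrow> nat \<Rightarrow> ('b \<Rightarrow> (nat \<rightharpoonup> nat)) set" where
  "VV G d = {\<psi>. \<forall>S\<in>G. \<psi> S \<in> pperm d}"

lemma ddist_le_card:
  assumes "d > 0" "ddist d \<sigma> \<tau> \<le> \<epsilon>"
  shows "card {i\<in>{1..d}. \<sigma> i \<noteq> \<tau> i} \<le> nat \<lfloor>\<epsilon> * d\<rfloor>"
proof -
  have "real (card {i\<in>{1..d}. \<sigma> i \<noteq> \<tau> i}) \<le> \<epsilon> * d"
    using assms unfolding ddist_def by (simp add: divide_le_eq mult.commute)
  then show ?thesis by linarith
qed

lemma distF_le:
  assumes "finite F" "S \<in> F" "distF d F \<phi> \<psi> \<le> \<epsilon>"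
  shows "ddist d (\<phi> S) (\<psi> S) \<le> \<epsilon>"
proof -
  have "ddist d (\<phi> S) (\<psi> S) \<le> distF d F \<phi> \<psi>"
    unfolding distF_def using assms by (intro Max_ge) auto
  then show ?thesis using assms by linarith
qed

lemma distF_nonneg: "finite F \<Longrightarrow> 0 \<le> distF d F \<phi> \<psi>"
  unfolding distF_def by (intro Max_ge) auto

lemma distF_same:
  assumes "\<And>S. S \<in> F \<Longrightarrow> \<phi> S = \<psi> S"
  shows "distF d F \<phi> \<psi> = 0"
proof -
  have "(\<lambda>S. ddist d (\<phi> S) (\<psi> S)) ` F \<subseteq> {0}"
    using assms by (auto simp: ddist_def)
  then have eq: "insert 0 ((\<lambda>S. ddist d (\<phi> S) (\<psi> S)) ` F) = {0}" by auto
  show ?thesis unfolding distF_def eq by simp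
qed

lemma ddist_le1: "d > 0 \<Longrightarrow> ddist d \<sigma> \<tau> \<le> 1"
proof -
  assume "d > 0"
  have "card {i\<in>{1..d}. \<sigma> i \<noteq> \<tau> i} \<le> card {1..d}" by (intro card_mono) auto
  then show ?thesis using \<open>d>0\<close> unfolding ddist_def by simp
qed

lemma cover_bound:
  assumes finF: "finite F" and FG: "F \<subseteq> G" and d: "d > 0" and AV: "A \<subseteq> VV G d"
    and finC: "finite C" and CV: "C \<subseteq> VV G d"
    and cov: "A \<subseteq> (\<Union>\<psi>\<in>C. {\<phi>. distF d F \<phi> \<psi> \<le> \<epsilon>})"
  shows "\<exists>C'. finite C' \<and> C' \<subseteq> VV G d \<and> A \<subseteq> (\<Union>\<psi>\<in>C'. {\<phi>. distF d F \<phi> \<psi> \<le> 0}) \<and>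
     card C' \<le> card C * (2^d * (d+1)^(nat \<lfloor>\<epsilon> * d\<rfloor>))^card F"
proof -
  define k where "k = nat \<lfloor>\<epsilon> * d\<rfloor>"
  define K where "K = (2^d * (d+1)^k)^card F"
  define rep where "rep r = (SOME \<phi>. \<phi> \<in> A \<and> restrict \<phi> F = r)" for r
  define Rr where "Rr \<psi> = (\<lambda>\<phi>. restrict \<phi> F) ` (A \<inter> {\<phi>. distF d F \<phi> \<psi> \<le> \<epsilon>})" for \<psi>
  define B where "B \<psi> = PiE F (\<lambda>S. {\<sigma>\<in>pperm d. card {i\<in>{1..d}. \<sigma> i \<noteq> \<psi> S i} \<le> k})" for \<psi>
  define C' where "C' = (\<Union>\<psi>\<in>C. rep ` Rr \<psi>)"
  have rep: "rep r \<in> A \<and> restrict (rep r) F = r" if "r \<in> Rr \<psi>" for r \<psi>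
  proof -
    from that obtain \<phi> where "\<phi> \<in> A" "restrict \<phi> F = r" unfolding Rr_def by blast
    then show ?thesis unfolding rep_def by (rule someI[of "\<lambda>\<phi>. \<phi> \<in> A \<and> restrict \<phi> F = r", OF conjI])
  qed
  have RB: "Rr \<psi> \<subseteq> B \<psi>" for \<psi>
  proof
    fix r assume "r \<in> Rr \<psi>"
    then obtain \<phi> where p: "\<phi> \<in> A" "distF d F \<phi> \<psi> \<le> \<epsilon>" "r = restrict \<phi> F" unfolding Rr_def by blast
    have "\<phi> S \<in> pperm d" if "S \<in> F" for S using p AV FG that unfolding VV_def by auto
    moreover have "card {i\<in>{1..d}. \<phi> S i \<noteq> \<psi> S i} \<le> k" if "S \<in> F" for S
      unfolding k_def using distF_le[OF finF that p(2)] d by (intro ddist_le_card) auto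
    ultimately show "r \<in> B \<psi>" unfolding B_def p(3) by auto
  qed
  have finB: "finite (B \<psi>)" for \<psi> unfolding B_def using finF finite_pperm by (intro finite_PiE) auto
  have cardB: "card (B \<psi>) \<le> K" for \<psi>
  proof -
    have "card (B \<psi>) = (\<Prod>S\<in>F. card {\<sigma>\<in>pperm d. card {i\<in>{1..d}. \<sigma> i \<noteq> \<psi> S i} \<le> k})"
      unfolding B_def using finF by (rule card_PiE)
    also have "\<dots> \<le> (\<Prod>S\<in>F. 2^d * (d+1)^k)"
    proof (rule prod_mono)
      fix S show "0 \<le> card {\<sigma>\<in>pperm d. card {i\<in>{1..d}. \<sigma> i \<noteq> \<psi> S i} \<le> k} \<and> card {\<sigma>\<in>pperm d. card {i\<in>{1..d}. \<sigma> i \<noteq> \<psi> S i} \<le> k} \<le> 2^d * (d+1)^k"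
        using card_ball_pperm[of d "\<psi> S" k] by simp
    qed
    finally show ?thesis unfolding K_def by simp
  qed
  have "finite C'" unfolding C'_def using finC finB RB by (meson finite_UN_I finite_imageI finite_subset)
  moreover have "C' \<subseteq> VV G d" unfolding C'_def using rep AV by blast
  moreover have "A \<subseteq> (\<Union>\<psi>\<in>C'. {\<phi>. distF d F \<phi> \<psi> \<le> 0})"
  proof
    fix \<phi> assume "\<phi> \<in> A"
    then obtain \<psi> where "\<psi> \<in> C" "distF d F \<phi> \<psi> \<le> \<epsilon>" using cov by blast
    then have r: "restrict \<phi> F \<in> Rr \<psi>" unfolding Rr_def using \<open>\<phi> \<in> A\<close> by blast
    then have "rep (restrict \<phi> F) \<in> C'" unfolding C'_def using \<open>\<psi> \<in> C\<close> by blast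
    moreover have "distF d F \<phi> (rep (restrict \<phi> F)) = 0"
    proof (rule distF_same)
      fix S assume "S \<in> F"
      have "restrict (rep (restrict \<phi> F)) F S = restrict \<phi> F S" using rep[OF r] by simp
      then show "\<phi> S = rep (restrict \<phi> F) S" using \<open>S \<in> F\<close> by simp
    qed
    ultimately show "\<phi> \<in> (\<Union>\<psi>\<in>C'. {\<phi>. distF d F \<phi> \<psi> \<le> 0})" by (intro UN_I) auto
  qed
  moreover have "card C' \<le> card C * K"
  proof -
    have "card C' \<le> (\<Sum>\<psi>\<in>C. card (rep ` Rr \<psi>))" unfolding C'_def by (rule card_UN_le[OF finC])
    also have "\<dots> \<le> (\<Sum>\<psi>\<in>C. K)"
    proof (rule sum_mono)
      fix \<psi> assume "\<psi> \<in> C"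
      have "card (rep ` Rr \<psi>) \<le> card (Rr \<psi>)" by (rule card_image_le) (rule finite_subset[OF RB finB])
      also have "\<dots> \<le> card (B \<psi>)" by (rule card_mono[OF finB RB])
      finally show "card (rep ` Rr \<psi>) \<le> K" using cardB[of \<psi>] by linarith
    qed
    finally show ?thesis by simp
  qed
  ultimately have X: "finite C' \<and> C' \<subseteq> VV G d \<and> A \<subseteq> (\<Union>\<psi>\<in>C'. {\<phi>. distF d F \<phi> \<psi> \<le> 0}) \<and> card C' \<le> card C * K" by (intro conjI)
  show ?thesis by (rule exI[of _ C']) (use X in \<open>simp only: K_def k_def\<close>)
qed


lemma pid_pperm: "pid d \<in> pperm d"
  unfolding pperm_def pid_def by (auto simp: ran_def dom_def inj_on_def split: if_splits)

lemma covnum_bound: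
  assumes finF: "finite F" and FG: "F \<subseteq> fullpg M R" and d: "d > 0"
    and AV: "A \<subseteq> VV (fullpg M R) d" and e: "\<epsilon> \<ge> 0"
  shows "covnum M R F d 0 A \<le> covnum M R F d \<epsilon> A * (2^d * (d+1)^(nat \<lfloor>\<epsilon> * d\<rfloor>))^card F"
proof -
  let ?G = "fullpg M R"
  define Cs where "Cs e = {card C | C. finite C \<and> C \<subseteq> VV ?G d \<and> A \<subseteq> (\<Union>\<psi>\<in>C. {\<phi>. distF d F \<phi> \<psi> \<le> e})}" for e
  have cn: "covnum M R F d e A = Inf (Cs e)" for e unfolding covnum_def Cs_def VV_def by simp
  define \<psi>0 where "\<psi>0 = (\<lambda>S::('a \<rightharpoonup> 'a) set. pid d)"
  have "\<psi>0 \<in> VV ?G d" unfolding VV_def \<psi>0_def using pid_pperm by auto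
  moreover have "distF d F \<phi> \<psi>0 \<le> 1" for \<phi>
    unfolding distF_def using finF ddist_le1[OF d] by (intro Max.boundedI) auto
  ultimately obtain C0 where C0: "finite C0" "C0 \<subseteq> VV ?G d" "A \<subseteq> (\<Union>\<psi>\<in>C0. {\<phi>. distF d F \<phi> \<psi> \<le> 0})"
    using cover_bound[OF finF FG d AV, of "{\<psi>0}" 1] by auto
  have "card C0 \<in> Cs \<epsilon>" unfolding Cs_def using C0 e by force
  then have "Cs \<epsilon> \<noteq> {}" by blast
  then have "Inf (Cs \<epsilon>) \<in> Cs \<epsilon>" by (rule Inf_nat_def1)
  then obtain C where C: "finite C" "C \<subseteq> VV ?G d" "A \<subseteq> (\<Union>\<psi>\<in>C. {\<phi>. distF d F \<phi> \<psi> \<le> \<epsilon>})"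
     "card C = Inf (Cs \<epsilon>)" unfolding Cs_def by auto
  obtain C' where C': "finite C'" "C' \<subseteq> VV ?G d" "A \<subseteq> (\<Union>\<psi>\<in>C'. {\<phi>. distF d F \<phi> \<psi> \<le> 0})"
     "card C' \<le> card C * (2^d * (d+1)^(nat \<lfloor>\<epsilon> * d\<rfloor>))^card F"
    using cover_bound[OF finF FG d AV C(1,2,3)] by blast
  have "card C' \<in> Cs 0" unfolding Cs_def using C' by force
  then have "Inf (Cs 0) \<le> card C'" by (rule cInf_lower) simp
  then show ?thesis unfolding cn using C'(4) C(4) by simp
qed


lemma lognorm_bound:
  fixes N0 Ne k c d :: nat and \<epsilon> :: real
  assumes d: "d \<ge> 2" and N: "N0 \<le> Ne * (2^d * (d+1)^k)^c" and k: "real k \<le> \<epsilon> * d" and e: "\<epsilon> \<ge> 0"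
  shows "lognorm d N0 \<le> lognorm d Ne + ereal (c * (ln 2 / ln d + 2 * \<epsilon>))"
proof (cases "N0 = 0")
  case True then show ?thesis by (simp add: lognorm_def)
next
  case False
  then have Ne: "Ne > 0" using N by (cases "Ne = 0") auto
  have lnd: "ln (real d) > 0" using d by simp
  have dpos: "real d > 0" using d by simp
  have "real N0 \<le> real (Ne * (2^d * (d+1)^k)^c)" using N by (simp only: of_nat_le_iff)
  also have "real (Ne * (2^d * (d+1)^k)^c) = real Ne * (2^d * (real d+1)^k)^c" by (simp add: add.commute)
  finally have N': "real N0 \<le> real Ne * (2^d * (real d+1)^k)^c" .
  have pos: "(2::real)^d * (real d+1)^k > 0" by simp
  have "ln (real N0) \<le> ln (real Ne * (2^d * (real d+1)^k)^c)"
    using False N' by (subst ln_le_cancel_iff) auto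
  also have "\<dots> = ln (real Ne) + ln ((2^d * (real d+1)^k)^c)"
    using Ne pos by (intro ln_mult_pos) auto
  also have "ln ((2^d * (real d+1)^k)^c) = c * ln (2^d * (real d+1)^k)"
    by (rule ln_realpow)
  also have "ln ((2::real)^d * (real d+1)^k) = ln (2^d) + ln ((real d+1)^k)"
    by (intro ln_mult_pos) auto
  also have "ln ((2::real)^d) = d * ln 2" by (rule ln_realpow)
  also have "ln ((real d+1)^k) = k * ln (real d + 1)" by (rule ln_realpow)
  also have "ln (real d + 1) \<le> 2 * ln d"
  proof -
    have "real d * real d \<ge> 2 * real d" using d by (intro mult_right_mono) auto
    moreover have "real d ^ 2 = real d * real d" by (simp add: power2_eq_square)
    moreover have "real d \<ge> 2" using d by simp
    ultimately have "real d + 1 \<le> real d ^ 2" by linarith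
    then have "ln (real d + 1) \<le> ln (real d ^ 2)" using dpos by (subst ln_le_cancel_iff) auto
    also have "ln (real d ^ 2) = 2 * ln d" using ln_realpow[of "real d" 2] by simp
    finally show ?thesis .
  qed
  also have "k * (2 * ln (real d)) \<le> (\<epsilon> * d) * (2 * ln d)"
    using k lnd by (intro mult_right_mono) auto
  finally have L: "ln (real N0) \<le> ln (real Ne) + c * (d * ln 2 + (\<epsilon> * d) * (2 * ln d))"
    by (simp add: mult_left_mono)
  have "ln (real N0) / (real d * ln d) \<le> (ln (real Ne) + c * (d * ln 2 + (\<epsilon> * d) * (2 * ln d))) / (real d * ln d)"
    using L lnd dpos by (intro divide_right_mono) auto
  also have "\<dots> = ln (real Ne) / (real d * ln d) + c * (ln 2 / ln d + 2 * \<epsilon>)"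
    using lnd dpos by (simp add: field_simps)
  finally show ?thesis using False Ne by (simp add: lognorm_def)
qed

lemma ultra_seq:
  assumes U: "nonprincipal_ultrafilter \<omega>" and ev: "eventually P sequentially"
  shows "eventually P \<omega>"
proof -
  obtain N where N: "\<And>n. n \<ge> N \<Longrightarrow> P n" using ev unfolding eventually_sequentially by blast
  have "eventually (\<lambda>x. x \<noteq> k) \<omega>" for k
    using U unfolding nonprincipal_ultrafilter_def by metis
  then have "eventually (\<lambda>x. \<forall>k\<in>{..<N}. x \<noteq> k) \<omega>" by (intro eventually_ball_finite) auto
  then show ?thesis by (rule eventually_mono) (metis N lessThan_iff not_le)
qed

lemma ultra_Lim:
  fixes u :: "nat \<Rightarrow> ereal"
  assumes U: "nonprincipal_ultrafilter \<omega>"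
  shows "Lim \<omega> u = Limsup \<omega> u"
proof -
  have nb: "\<omega> \<noteq> bot" using U unfolding nonprincipal_ultrafilter_def by auto
  have "(u \<longlongrightarrow> Limsup \<omega> u) \<omega>"
  proof (rule order_tendstoI)
    fix a assume a: "a < Limsup \<omega> u"
    show "eventually (\<lambda>x. a < u x) \<omega>"
    proof (rule ccontr)
      assume "\<not> eventually (\<lambda>x. a < u x) \<omega>"
      then have "eventually (\<lambda>x. \<not> a < u x) \<omega>" using U unfolding nonprincipal_ultrafilter_def by metis
      then have "eventually (\<lambda>x. u x \<le> a) \<omega>" by (rule eventually_mono) auto
      then have "Limsup \<omega> u \<le> a" by (rule Limsup_bounded)
      then show False using a by simp
    qed
  next
    fix b assume "Limsup \<omega> u < b"
    then show "eventually (\<lambda>x. u x < b) \<omega>" by (rule Limsup_lessD)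
  qed
  then show ?thesis using nb by (intro tendsto_Lim) auto
qed

lemma agg_step:
  fixes f g :: "real \<Rightarrow> nat \<Rightarrow> ereal" and agg :: "(nat \<Rightarrow> ereal) \<Rightarrow> ereal"
  assumes ev: "\<And>\<delta>. eventually (\<lambda>d. f \<delta> d \<le> g \<delta> d + ereal \<kappa>) sequentially"
    and mono: "\<And>u v. eventually (\<lambda>d. u d \<le> v d) sequentially \<Longrightarrow> agg u \<le> agg v"
    and shift: "\<And>u. agg (\<lambda>d. u d + ereal \<kappa>) = agg u + ereal \<kappa>"
  shows "(INF \<delta>\<in>{0<..}. agg (f \<delta>)) \<le> (INF \<delta>\<in>{0<..}. agg (g \<delta>)) + ereal \<kappa>"
proof -
  let ?a = "(INF \<delta>\<in>({0<..}::real set). agg (f \<delta>))"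
  have "?a - ereal \<kappa> \<le> agg (g \<delta>)" if "\<delta> \<in> {0<..}" for \<delta>
  proof -
    have "?a \<le> agg (f \<delta>)" using that by (rule INF_lower)
    also have "\<dots> \<le> agg (\<lambda>d. g \<delta> d + ereal \<kappa>)" by (rule mono[OF ev])
    also have "\<dots> = agg (g \<delta>) + ereal \<kappa>" by (rule shift)
    finally have "?a \<le> agg (g \<delta>) + ereal \<kappa>" .
    then show ?thesis using ereal_minus_le[of "ereal \<kappa>" ?a "agg (g \<delta>)"] by simp
  qed
  then have "?a - ereal \<kappa> \<le> (INF \<delta>\<in>{0<..}. agg (g \<delta>))" by (rule INF_greatest)
  then show ?thesis using ereal_minus_le[of "ereal \<kappa>" ?a "(INF \<delta>\<in>{0<..}. agg (g \<delta>))"] by simp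
qed


lemma SA_VV: "SA M R F n \<delta> d \<subseteq> VV (fullpg M R) d"
  unfolding SA_def VV_def by auto

lemma t1: "(\<epsilon>::real) > 0 \<Longrightarrow> real (nat \<lfloor>\<epsilon> * real (d::nat)\<rfloor>) \<le> \<epsilon> * d"
proof -
  assume e: "\<epsilon> > 0"
  have "\<lfloor>\<epsilon> * d\<rfloor> \<ge> 0" using e by simp
  then have "real (nat \<lfloor>\<epsilon> * d\<rfloor>) = real_of_int \<lfloor>\<epsilon> * d\<rfloor>" by simp
  then show ?thesis by linarith
qed
lemma t2:
  fixes c :: nat and \<kappa> L :: real
  assumes \<kappa>: "\<kappa> > 0" and lnd: "L > 0" and h: "2 * c * ln 2 / \<kappa> + 1 \<le> L"
  shows "c * (ln 2 / L) \<le> \<kappa> / 2"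
proof -
  have "2 * c * ln 2 / \<kappa> \<le> L" using h by linarith
  then have a: "2 * c * ln 2 \<le> L * \<kappa>" using \<kappa> by (simp add: pos_divide_le_eq)
  have "c * (ln 2 / L) = (c * ln 2) / L" by simp
  also have "\<dots> \<le> \<kappa> / 2"
  proof -
    have "real (2 * c) * ln 2 = 2 * (real c * ln 2)" by simp
    then have "real c * ln 2 \<le> \<kappa> / 2 * L" using a by (simp add: mult_ac)
    then show ?thesis using lnd by (simp add: pos_divide_le_eq)
  qed
  finally show ?thesis .
qed
lemma t3:
  fixes c :: nat and \<kappa> \<epsilon> :: real
  assumes \<kappa>: "\<kappa> > 0" and e: "\<epsilon> = \<kappa> / (4 * (c + 1))"
  shows "c * (2 * \<epsilon>) \<le> \<kappa> / 2"
proof -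
  have "c * (2 * \<epsilon>) = \<kappa> / 2 * (c / (c + 1))" unfolding e by (simp add: field_simps)
  also have "\<dots> \<le> \<kappa> / 2 * 1" using \<kappa> by (intro mult_left_mono) auto
  finally show ?thesis by simp
qed

lemma key_ev:
  assumes finF: "finite F" and FG: "F \<subseteq> fullpg M R" and \<kappa>: "\<kappa> > 0"
    and \<epsilon>_def: "\<epsilon> = \<kappa> / (4 * (card F + 1))"
  shows "eventually (\<lambda>d. lognorm d (covnum M R F d 0 (SA M R F n \<delta> d))
            \<le> lognorm d (covnum M R F d \<epsilon> (SA M R F n \<delta> d)) + ereal \<kappa>) sequentially"
proof -
  let ?c = "card F"
  have e: "\<epsilon> > 0" unfolding \<epsilon>_def using \<kappa> by simp
  have lim: "filterlim (\<lambda>d. ln (real d)) at_top sequentially"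
    by (rule filterlim_compose[OF ln_at_top filterlim_real_sequentially])
  have ev1: "eventually (\<lambda>d. ln (real d) \<ge> 2 * ?c * ln 2 / \<kappa> + 1) sequentially"
    using lim unfolding filterlim_at_top by blast
  have ev2: "eventually (\<lambda>d. d \<ge> (2::nat)) sequentially" by (rule eventually_ge_at_top)
  show ?thesis using ev1 ev2
  proof eventually_elim
    case (elim d)
    have lnd: "ln (real d) > 0" using elim(2) by simp
    have k: "real (nat \<lfloor>\<epsilon> * d\<rfloor>) \<le> \<epsilon> * d" using e by (rule t1)
    have d0: "d > 0" using elim(2) by simp
    have cb: "covnum M R F d 0 (SA M R F n \<delta> d) \<le> covnum M R F d \<epsilon> (SA M R F n \<delta> d) * (2^d * (d+1)^(nat \<lfloor>\<epsilon> * d\<rfloor>))^card F"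
      by (rule covnum_bound[OF finF FG d0 SA_VV]) (use e in auto)
    have lb: "lognorm d (covnum M R F d 0 (SA M R F n \<delta> d)) \<le> lognorm d (covnum M R F d \<epsilon> (SA M R F n \<delta> d)) + ereal (?c * (ln 2 / ln d + 2 * \<epsilon>))"
      by (rule lognorm_bound[OF elim(2) cb k]) (use e in auto)
    have "?c * (ln 2 / ln d) \<le> \<kappa> / 2" using \<kappa> lnd elim(1) by (rule t2)
    moreover have "?c * (2 * \<epsilon>) \<le> \<kappa> / 2" using \<kappa> \<epsilon>_def by (rule t3)
    moreover have "?c * (ln 2 / ln d + 2 * \<epsilon>) = ?c * (ln 2 / ln d) + ?c * (2 * \<epsilon>)" by (simp add: distrib_left)
    ultimately have "?c * (ln 2 / ln d + 2 * \<epsilon>) \<le> \<kappa>" by linarith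
    then have "ereal (?c * (ln 2 / ln d + 2 * \<epsilon>)) \<le> ereal \<kappa>" by simp
    then show ?case using lb by (meson add_left_mono order_trans)
  qed
qed

theorem mainTheorem9:
  fixes M :: "'a::polish_space measure" and R :: "('a \<times> 'a) set"
    and F :: "('a \<rightharpoonup> 'a) set set"
  assumes "pmp_cber M R" and "finite F" and "F \<subseteq> fullpg M R"
  shows "(\<forall>\<kappa>>0. \<exists>\<epsilon>>0. \<forall>n. sdim limsup M R F n 0 \<le> sdim limsup M R F n \<epsilon> + ereal \<kappa>)
       \<and> (\<forall>\<kappa>>0. \<exists>\<epsilon>>0. \<forall>n. sdim liminf M R F n 0 \<le> sdim liminf M R F n \<epsilon> + ereal \<kappa>)
       \<and> (\<forall>\<omega>. nonprincipal_ultrafilter \<omega> \<longrightarrow>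
            (\<forall>\<kappa>>0. \<exists>\<epsilon>>0. \<forall>n. sdim (\<lambda>f. Lim \<omega> f) M R F n 0 \<le> sdim (\<lambda>f. Lim \<omega> f) M R F n \<epsilon> + ereal \<kappa>))"
proof -
  have gen: "\<exists>\<epsilon>>0. \<forall>n. sdim agg M R F n 0 \<le> sdim agg M R F n \<epsilon> + ereal \<kappa>"
    if \<kappa>: "\<kappa> > 0"
      and mono: "\<And>u v. eventually (\<lambda>d. u d \<le> v d) sequentially \<Longrightarrow> agg u \<le> agg v"
      and shift: "\<And>u. agg (\<lambda>d. u d + ereal \<kappa>) = agg u + ereal \<kappa>"
    for \<kappa> and agg :: "(nat \<Rightarrow> ereal) \<Rightarrow> ereal"
  proof (intro exI conjI allI)
    show "\<kappa> / (4 * (card F + 1)) > 0" using \<kappa> by simp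
    fix n
    show "sdim agg M R F n 0 \<le> sdim agg M R F n (\<kappa> / (4 * (card F + 1))) + ereal \<kappa>"
      unfolding sdim_def
      by (rule agg_step[where f="\<lambda>\<delta> d. lognorm d (covnum M R F d 0 (SA M R F n \<delta> d))"
            and g="\<lambda>\<delta> d. lognorm d (covnum M R F d (\<kappa> / (4 * (card F + 1))) (SA M R F n \<delta> d))"])
          (rule key_ev[OF assms(2,3) \<kappa> refl], erule mono, rule shift)
  qed
  have A: "\<forall>\<kappa>>0. \<exists>\<epsilon>>0. \<forall>n. sdim limsup M R F n 0 \<le> sdim limsup M R F n \<epsilon> + ereal \<kappa>"
    by (intro allI impI gen) (auto intro: Limsup_mono Limsup_add_ereal_right)
  have B: "\<forall>\<kappa>>0. \<exists>\<epsilon>>0. \<forall>n. sdim liminf M R F n 0 \<le> sdim liminf M R F n \<epsilon> + ereal \<kappa>"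
    by (intro allI impI gen) (auto intro: Liminf_mono Liminf_add_ereal_right)
  have C: "\<forall>\<kappa>>0. \<exists>\<epsilon>>0. \<forall>n. sdim (\<lambda>f. Lim \<omega> f) M R F n 0 \<le> sdim (\<lambda>f. Lim \<omega> f) M R F n \<epsilon> + ereal \<kappa>"
    if U: "nonprincipal_ultrafilter \<omega>" for \<omega>
  proof (intro allI impI gen)
    have nb: "\<omega> \<noteq> bot" using U unfolding nonprincipal_ultrafilter_def by auto
    fix \<kappa> :: real
    show "Lim \<omega> u \<le> Lim \<omega> v" if "eventually (\<lambda>d. u d \<le> v d) sequentially" for u v :: "nat \<Rightarrow> ereal"
      unfolding ultra_Lim[OF U] by (rule Limsup_mono[OF ultra_seq[OF U that]])
    show "Lim \<omega> (\<lambda>d. u d + ereal \<kappa>) = Lim \<omega> u + ereal \<kappa>" for u :: "nat \<Rightarrow> ereal"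
      unfolding ultra_Lim[OF U] using nb by (intro Limsup_add_ereal_right) auto
  qed
  show ?thesis using A B C by blast
qed

end
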